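(* Let $\mathcal H$ be a complex separable Hilbert space with orthonormal basis $(|k\rangle)_{k\in\mathbb Z}$, let $Z$ be the selfadjoint operator with $Z|k\rangle=k|k\rangle$, and $V_x=e^{ixZ}$, $x\in\mathbb R$. Let $B:\mathbb Z\times\mathbb Z\to\mathbb D$ ($\mathbb D$ the closed unit disc) be positive semidefinite with $B(k,k)=1$ for all $k$, and let $E^B$ be the semispectral measure on the Borel sets of $[0,2\pi)$ given weakly by $$E^B(X)=\sum_{k,l\in\mathbb Z}B(k,l)\,i_X(k,l)\,|k\rangle\langle l|,\qquad i_X(k,l)=\frac1{2\pi}\int_Xe^{i(k-l)x}\,dx.$$ Let $E^1$ denote $E^B$ for the constant function $B\equiv1$. Then the following are equivalent: (a) $E^B$ is noiseless, i.e. $S^B_E:=E^B[2]-E^B[1]^2=0$, where $E^B[j]=\int_0^{2\pi}x^j\,dE^B(x)$ (weakly defined moment operators); (b) $B$ is noiseless, i.e. $s_n^B(l)=0$ for all $n\in\mathbb Z$ and all $l\in\{0,1,2,\ldots\}$, where $s_n^B(l)=(\pi/\sqrt3)^l\big(1-\frac3{\pi^2}\sum_{k\in\mathbb Z,k\neq n}\frac{|B(n,k)|^l}{(k-n)^2}\big)$; (c) $B$ takes values in the unit circle $\mathbb T$; (d) $E^B\simeq E^1$, i.e. there is a unitary $W$ on $\mathcal H$ with $WV_xW^*=V_x$ for all $x\in\mathbb R$ and $WE^1(X)W^*=E^B(X)$ for all Borel $X\subseteq[0,2\pi)$.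
   Context: Such $E^B$ are exactly the semispectral measures $E$ on $[0,2\pi)$ satisfying $V_xE(X)V_x^*=E(X\oplus x)$, where $X\oplus x=\{y\in[0,2\pi):(y-x)\bmod 2\pi\in X\}$ (translation mod $2\pi$ covariant box localization observables); $E^1$ is the canonical spectral measure. One has $\langle n|S^B_E|n\rangle=s_n^B(2)$ for all $n\in\mathbb Z$. *)

theory Defs
  imports "HOL-Analysis.Analysis"
begin

text \<open>The Hilbert space is l2(Z) with standard basis |k>, k in Z. Operators are
represented by their matrix elements M k l = <k|M|l> (weak definition).\<close>

type_synonym cmatrix = "int \<Rightarrow> int \<Rightarrow> complex"

definition bounded_matrix :: "cmatrix \<Rightarrow> bool" where
  "bounded_matrix M \<longleftrightarrow> (\<exists>C. \<forall>F f g. finite F \<longrightarrow>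
     cmod (\<Sum>k\<in>F. \<Sum>l\<in>F. cnj (f k) * M k l * g l)
       \<le> C * sqrt (\<Sum>k\<in>F. (cmod (f k))^2) * sqrt (\<Sum>l\<in>F. (cmod (g l))^2))"

definition mmult :: "cmatrix \<Rightarrow> cmatrix \<Rightarrow> cmatrix" where
  "mmult A C k l = (\<Sum>\<^sub>\<infinity>m. A k m * C m l)"

definition adjm :: "cmatrix \<Rightarrow> cmatrix" where
  "adjm A k l = cnj (A l k)"

definition idm :: cmatrix where
  "idm k l = (if k = l then 1 else 0)"

definition unitary_matrix :: "cmatrix \<Rightarrow> bool" where
  "unitary_matrix W \<longleftrightarrow> bounded_matrix W \<and> mmult W (adjm W) = idm \<and> mmult (adjm W) W = idm"

definition Vop :: "real \<Rightarrow> cmatrix" where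
  "Vop x k l = (if k = l then exp (\<i> * of_real x * of_int k) else 0)"

definition iX :: "real set \<Rightarrow> int \<Rightarrow> int \<Rightarrow> complex" where
  "iX X k l = complex_of_real (1 / (2 * pi)) *
      (LINT x:X|lborel. exp (\<i> * of_int (k - l) * of_real x))"

definition EB :: "cmatrix \<Rightarrow> real set \<Rightarrow> cmatrix" where
  "EB B X k l = B k l * iX X k l"

text \<open>Moment operators E^B[j] = int_0^{2pi} x^j dE^B(x), weakly:
  <k|E^B[j]|l> = int x^j d<k|E^B(.)|l>(x), the complex measure having density
  B(k,l) e^{i(k-l)x}/(2 pi) on [0,2pi).\<close>
definition EBmoment :: "cmatrix \<Rightarrow> nat \<Rightarrow> cmatrix" where
  "EBmoment B j k l = B k l * complex_of_real (1 / (2 * pi)) *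
      (LINT x:{0..<2*pi}|lborel. (complex_of_real x) ^ j * exp (\<i> * of_int (k - l) * of_real x))"

definition noise_op :: "cmatrix \<Rightarrow> cmatrix" where
  "noise_op B k l = EBmoment B 2 k l - mmult (EBmoment B 1) (EBmoment B 1) k l"

definition sB :: "cmatrix \<Rightarrow> int \<Rightarrow> nat \<Rightarrow> real" where
  "sB B n l = (pi / sqrt 3) ^ l *
     (1 - 3 / pi\<^sup>2 * (\<Sum>\<^sub>\<infinity>k\<in>UNIV - {n}. (cmod (B n k)) ^ l / (real_of_int (k - n))\<^sup>2))"

definition psd_kernel :: "cmatrix \<Rightarrow> bool" where
  "psd_kernel B \<longleftrightarrow> (\<forall>F c. finite F \<longrightarrow>
     (let s = (\<Sum>k\<in>F. \<Sum>l\<in>F. cnj (c k) * B k l * c l) in Im s = 0 \<and> Re s \<ge> 0))"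

end

theory Submission
  imports Defs
begin

lemma lint_Ico:
  fixes f F :: "real \<Rightarrow> complex"
  assumes ab: "a \<le> b" and F: "\<And>x. (F has_vector_derivative f x) (at x)"
    and f: "continuous_on UNIV f"
  shows "(LINT x:{a..<b}|lborel. f x) = F b - F a"
proof -
  have m: "f \<in> borel_measurable borel" using f by (rule borel_measurable_continuous_onI)
  have "(LINT x:{a..<b}|lborel. f x) = (LINT x:{a..b}|lborel. f x)"
    apply (rule set_integral_cong_set)
    using m apply (auto simp: set_borel_measurable_def)
    using AE_lborel_singleton[of b] by eventually_elim auto
  also have "\<dots> = F b - F a"
    unfolding set_lebesgue_integral_def
    by (rule integral_FTC_atLeastAtMost[OF ab])
       (auto intro: has_vector_derivative_at_within F continuous_on_subset[OF f])
  finally show ?thesis .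
qed

lemma exp_2pi_int: "exp (\<i> * of_int d * of_real (2*pi)) = 1"
proof -
  have "exp (\<i> * of_int d * of_real (2*pi)) = exp ((2 * of_int d * pi) * \<i>)"
    by (simp add: algebra_simps)
  also have "\<dots> = 1" by (rule exp_integer_2pi) simp
  finally show ?thesis .
qed

lemma int0:
  fixes c :: complex assumes c: "c \<noteq> 0" and a: "0 \<le> a"
  shows "(LINT x:{0..<a}|lborel. exp (\<i> * c * of_real x)) = (exp (\<i> * c * of_real a) - 1) / (\<i> * c)"
proof -
  have "(LINT x:{0..<a}|lborel. exp (\<i> * c * of_real x)) =
     (\<lambda>x. exp (\<i> * c * of_real x) / (\<i> * c)) a - (\<lambda>x. exp (\<i> * c * of_real x) / (\<i> * c)) 0"
  proof (rule lint_Ico[OF a])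
    fix x :: real
    have "((\<lambda>z. exp (\<i> * c * z) / (\<i> * c)) has_field_derivative exp (\<i> * c * of_real x)) (at (of_real x))"
      using c by (auto intro!: derivative_eq_intros)
    then show "((\<lambda>x. exp (\<i> * c * of_real x) / (\<i> * c)) has_vector_derivative exp (\<i> * c * of_real x)) (at x)"
      by (rule has_vector_derivative_real_field)
  qed (intro continuous_intros)
  then show ?thesis by (simp add: diff_divide_distrib)
qed

lemma int1:
  fixes c :: complex assumes c: "c \<noteq> 0" and a: "0 \<le> a"
  shows "(LINT x:{0..<a}|lborel. of_real x * exp (\<i> * c * of_real x)) =
     exp (\<i> * c * of_real a) * (of_real a / (\<i> * c) + 1 / c^2) - 1 / c^2"
proof -
  let ?F = "\<lambda>z. exp (\<i> * c * z) * (z / (\<i> * c) + 1 / c^2)"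
  have "(LINT x:{0..<a}|lborel. of_real x * exp (\<i> * c * of_real x)) =
     (\<lambda>x. ?F (of_real x)) a - (\<lambda>x. ?F (of_real x)) 0"
  proof (rule lint_Ico[OF a])
    fix x :: real
    have "(?F has_field_derivative of_real x * exp (\<i> * c * of_real x)) (at (of_real x))"
      using c apply (auto intro!: derivative_eq_intros)
      by (simp add: field_simps power2_eq_square)
    then show "((\<lambda>x. ?F (of_real x)) has_vector_derivative of_real x * exp (\<i> * c * of_real x)) (at x)"
      by (rule has_vector_derivative_real_field)
  qed (intro continuous_intros)
  then show ?thesis by simp
qed

lemma int2:
  fixes c :: complex assumes c: "c \<noteq> 0" and a: "0 \<le> a"
  shows "(LINT x:{0..<a}|lborel. (of_real x)^2 * exp (\<i> * c * of_real x)) =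
     exp (\<i> * c * of_real a) * (- \<i> * (of_real a)^2 / c + 2 * of_real a / c^2 + 2 * \<i> / c^3) - 2 * \<i> / c^3"
proof -
  let ?F = "\<lambda>z. exp (\<i> * c * z) * (- \<i> * z^2 / c + 2 * z / c^2 + 2 * \<i> / c^3)"
  have "(LINT x:{0..<a}|lborel. (of_real x)^2 * exp (\<i> * c * of_real x)) =
     (\<lambda>x. ?F (of_real x)) a - (\<lambda>x. ?F (of_real x)) 0"
  proof (rule lint_Ico[OF a])
    fix x :: real
    have "(?F has_field_derivative (of_real x)^2 * exp (\<i> * c * of_real x)) (at (of_real x))"
      using c apply (auto intro!: derivative_eq_intros)
      by (simp add: field_simps power2_eq_square power3_eq_cube eval_nat_numeral)
    then show "((\<lambda>x. ?F (of_real x)) has_vector_derivative (of_real x)^2 * exp (\<i> * c * of_real x)) (at x)"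
      by (rule has_vector_derivative_real_field)
  qed (intro continuous_intros)
  then show ?thesis by simp
qed

lemma intp1:
  fixes a :: real assumes a: "0 \<le> a"
  shows "(LINT x:{0..<a}|lborel. (of_real x :: complex)) = of_real (a^2 / 2)"
proof -
  have "(LINT x:{0..<a}|lborel. (of_real x :: complex)) =
     (\<lambda>x. of_real (x^2 / 2)) a - (\<lambda>x. of_real (x^2 / 2)) 0"
  proof (rule lint_Ico[OF a])
    fix x :: real
    have "((\<lambda>z::complex. z^2 / 2) has_field_derivative (of_real x)) (at (of_real x))"
      by (auto intro!: derivative_eq_intros)
    then show "((\<lambda>x. complex_of_real (x^2 / 2)) has_vector_derivative (of_real x)) (at x)"
      using has_vector_derivative_real_field by fastforce
  qed (intro continuous_intros)
  then show ?thesis by simp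
qed

lemma intp2:
  fixes a :: real assumes a: "0 \<le> a"
  shows "(LINT x:{0..<a}|lborel. (of_real x :: complex)^2) = of_real (a^3 / 3)"
proof -
  have "(LINT x:{0..<a}|lborel. (of_real x :: complex)^2) =
     (\<lambda>x. of_real (x^3 / 3)) a - (\<lambda>x. of_real (x^3 / 3)) 0"
  proof (rule lint_Ico[OF a])
    fix x :: real
    have "((\<lambda>z::complex. z^3 / 3) has_field_derivative (of_real x)^2) (at (of_real x))"
      by (auto intro!: derivative_eq_intros simp: eval_nat_numeral)
    then show "((\<lambda>x. complex_of_real (x^3 / 3)) has_vector_derivative (of_real x)^2) (at x)"
      using has_vector_derivative_real_field by fastforce
  qed (intro continuous_intros)
  then show ?thesis by simp
qed

lemma EBm1: "EBmoment B 1 k l = B k l * (if k = l then of_real pi else - \<i> / of_int (k - l))"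
proof (cases "k = l")
  case True
  then show ?thesis unfolding EBmoment_def using intp1[of "2*pi"] by (simp add: power2_eq_square)
next
  case False
  let ?c = "complex_of_int (k - l)"
  have c: "?c \<noteq> 0" using False by simp
  have "EBmoment B 1 k l = B k l * complex_of_real (1 / (2 * pi)) *
      (LINT x:{0..<2*pi}|lborel. of_real x * exp (\<i> * ?c * of_real x))"
    unfolding EBmoment_def by simp
  also have "\<dots> = B k l * complex_of_real (1 / (2 * pi)) * (of_real (2*pi) / (\<i> * ?c))"
    using int1[OF c, of "2*pi"] exp_2pi_int[of "k-l"] by simp
  also have "\<dots> = B k l * (- \<i> / ?c)"
    using c by (simp add: field_simps)
  finally show ?thesis using False by simp
qed

lemma EBm2: "EBmoment B 2 k l = B k l * (if k = l then of_real (4 * pi^2 / 3)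
   else - 2 * of_real pi * \<i> / of_int (k - l) + 2 / (of_int (k - l))^2)"
proof (cases "k = l")
  case True
  then show ?thesis unfolding EBmoment_def using intp2[of "2*pi"]
    by (simp add: field_simps power2_eq_square power3_eq_cube)
next
  case False
  let ?c = "complex_of_int (k - l)"
  have c: "?c \<noteq> 0" using False by simp
  have "EBmoment B 2 k l = B k l * complex_of_real (1 / (2 * pi)) *
      (LINT x:{0..<2*pi}|lborel. (of_real x)^2 * exp (\<i> * ?c * of_real x))"
    unfolding EBmoment_def by simp
  also have "\<dots> = B k l * complex_of_real (1 / (2 * pi)) *
      (- \<i> * (of_real (2*pi))^2 / ?c + 2 * of_real (2*pi) / ?c^2)"
    using int2[OF c, of "2*pi"] exp_2pi_int[of "k-l"] by simp
  also have "\<dots> = B k l * (- 2 * of_real pi * \<i> / ?c + 2 / ?c^2)"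
  proof -
    have "\<And>c::complex. c \<noteq> 0 \<Longrightarrow> complex_of_real (1 / (2 * pi)) *
      (- \<i> * (of_real (2*pi))^2 / c + 2 * of_real (2*pi) / c^2) = - 2 * of_real pi * \<i> / c + 2 / c^2"
      by (simp add: field_simps power2_eq_square)
    from this[OF c] show ?thesis by (metis mult.assoc)
  qed
  finally show ?thesis using False by simp
qed

lemma has_sum_diff':
  fixes f g :: "'a \<Rightarrow> 'b::topological_ab_group_add"
  assumes "(f has_sum a) A" "(g has_sum b) A"
  shows "((\<lambda>x. f x - g x) has_sum (a - b)) A"
proof -
  have "((\<lambda>x. - g x) has_sum (-b)) A" using has_sum_uminus[of g A "-b"] assms(2) by simp
  from has_sum_add[OF assms(1) this] show ?thesis by simp
qed

definition hh :: "int \<Rightarrow> real" where "hh j = 1 / real_of_int j"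

lemma telesc_nat: "((\<lambda>n::nat. 1 / real (Suc n) - 1 / real n) has_sum 0) UNIV"
proof -
  let ?u = "\<lambda>n::nat. 1 / real n"
  have lim: "?u \<longlonglongrightarrow> 0" by (rule lim_1_over_n)
  have s: "(\<lambda>n. ?u (Suc n) - ?u n) sums (0 - ?u 0)" by (rule telescope_sums[OF lim])
  have s2: "(\<lambda>n. ?u n - ?u (Suc n)) sums (?u 0 - 0)" by (rule telescope_sums'[OF lim])
  have "summable (\<lambda>n. norm (?u (Suc (n+1)) - ?u (n+1)))"
  proof -
    have "summable (\<lambda>n. ?u (n+1) - ?u (Suc (n+1)))"
      using s2 summable_iff_shift[of "\<lambda>n. ?u n - ?u (Suc n)" 1] by (auto simp: sums_iff)
    moreover have "norm (?u (Suc (n+1)) - ?u (n+1)) = ?u (n+1) - ?u (Suc (n+1))" for n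
      by (auto simp: frac_le divide_simps)
    ultimately show ?thesis by simp
  qed
  then have "summable (\<lambda>n. norm (?u (Suc n) - ?u n))"
    using summable_iff_shift[of "\<lambda>n. norm (?u (Suc n) - ?u n)" 1] by simp
  from norm_summable_imp_has_sum[OF this] s show ?thesis by simp
qed

lemma D_has_sum: "((\<lambda>j. hh j - hh (j - 1)) has_sum 0) UNIV"
proof -
  let ?D = "\<lambda>j. hh j - hh (j - 1)"
  let ?f1 = "\<lambda>n::nat. int n + 1" and ?f2 = "\<lambda>n::nat. - int n"
  have e1: "(?D \<circ> ?f1) = (\<lambda>n::nat. 1 / real (Suc n) - 1 / real n)"
    by (auto simp: hh_def)
  have e2: "(?D \<circ> ?f2) = (\<lambda>n::nat. 1 / real (Suc n) - 1 / real n)"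
  proof
    fix n :: nat
    have nz: "real n + 1 \<noteq> 0" by simp
    have "- real n - 1 = - (real n + 1)" by simp
    then have "1 / (- real n - 1) = - (1 / (real n + 1))" by (simp only: divide_minus_right)
    then show "(?D \<circ> ?f2) n = 1 / real (Suc n) - 1 / real n"
      by (simp add: hh_def)
  qed
  have h1: "(?D has_sum 0) (range ?f1)"
  proof -
    have "inj ?f1" by (auto simp: inj_on_def)
    then have "(?D has_sum 0) (range ?f1) \<longleftrightarrow> ((?D \<circ> ?f1) has_sum 0) UNIV" by (rule has_sum_reindex)
    then show ?thesis unfolding e1 using telesc_nat by blast
  qed
  have h2: "(?D has_sum 0) (range ?f2)"
  proof -
    have "inj ?f2" by (auto simp: inj_on_def)
    then have "(?D has_sum 0) (range ?f2) \<longleftrightarrow> ((?D \<circ> ?f2) has_sum 0) UNIV" by (rule has_sum_reindex)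
    then show ?thesis unfolding e2 using telesc_nat by blast
  qed
  have "?f1 a \<noteq> ?f2 b" for a b by simp
  then have dj: "range ?f1 \<inter> range ?f2 = {}" by blast
  have un: "range ?f1 \<union> range ?f2 = UNIV"
  proof -
    have "j \<in> range ?f1 \<union> range ?f2" for j :: int
    proof (cases "j > 0")
      case True then have "j = ?f1 (nat (j - 1))" by simp
      then show ?thesis by blast
    next
      case False then have "j = ?f2 (nat (- j))" by simp
      then show ?thesis by blast
    qed
    then show ?thesis by blast
  qed
  from has_sum_Un_disjoint[OF h1 h2 dj] show ?thesis unfolding un by simp
qed

lemma shift_has_sum:
  fixes f :: "int \<Rightarrow> 'b::topological_comm_monoid_add"
  shows "(f has_sum a) UNIV \<Longrightarrow> ((\<lambda>j. f (j + t)) has_sum a) UNIV"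
proof -
  have b: "bij_betw (\<lambda>j. j + t) UNIV (UNIV :: int set)"
    by (rule bij_betwI[where g="\<lambda>j. j - t"]) auto
  show "(f has_sum a) UNIV \<Longrightarrow> ((\<lambda>j. f (j + t)) has_sum a) UNIV"
    using has_sum_reindex_bij_betw[OF b, of f a] by simp
qed

lemma G_nat_has_sum: "((\<lambda>j. hh j - hh (j - int e)) has_sum 0) UNIV"
proof (induction e)
  case 0 then show ?case by simp
next
  case (Suc e)
  have "((\<lambda>j. (hh j - hh (j - int e)) + (hh (j - int e) - hh (j - int e - 1))) has_sum (0 + 0)) UNIV"
    by (rule has_sum_add[OF Suc.IH]) (rule shift_has_sum[OF D_has_sum, of "- int e", simplified])
  then show ?case by (simp add: algebra_simps)
qed

lemma G_has_sum: "((\<lambda>j. hh j - hh (j - d)) has_sum 0) UNIV"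
proof (cases "d \<ge> 0")
  case True
  then show ?thesis using G_nat_has_sum[of "nat d"] by simp
next
  case False
  have "((\<lambda>j. hh (j + (- d)) - hh (j + (- d) - int (nat (- d)))) has_sum 0) UNIV"
    by (rule shift_has_sum[OF G_nat_has_sum])
  then have "((\<lambda>j. - (hh j - hh (j - d))) has_sum 0) UNIV" using False by simp
  then show ?thesis using has_sum_uminus[of "\<lambda>j. hh j - hh (j - d)" UNIV 0] by simp
qed

lemma offdiag_sum:
  fixes k l :: int assumes kl: "k \<noteq> l"
  shows "((\<lambda>m. 1 / (real_of_int (k - m) * real_of_int (m - l))) has_sum (- 2 / (real_of_int (k - l))^2)) UNIV"
proof -
  define d where "d = k - l"
  have d: "d \<noteq> 0" using kl by (simp add: d_def)
  define g where "g j = (if j = 0 then 1 / (real_of_int d)^2 else 0) + (if j = d then 1 / (real_of_int d)^2 else 0)" for j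
  have gs: "(g has_sum (2 / (real_of_int d)^2)) UNIV"
    by (rule has_sum_finite_neutralI[of "{0, d}"]) (use d in \<open>auto simp: g_def\<close>)
  have "((\<lambda>j. (hh j - hh (j - d)) * (1 / real_of_int d)) has_sum (0 * (1 / real_of_int d))) UNIV"
    by (rule has_sum_cmult_left[OF G_has_sum])
  from has_sum_diff'[OF this gs]
  have "((\<lambda>j. (hh j - hh (j - d)) * (1 / real_of_int d) - g j) has_sum (- 2 / (real_of_int d)^2)) UNIV"
    by simp
  moreover have "(hh j - hh (j - d)) * (1 / real_of_int d) - g j = 1 / (real_of_int (d - j) * real_of_int j)" for j
  proof -
    consider "j = 0" | "j = d" | "j \<noteq> 0" "j \<noteq> d" by blast
    then show ?thesis
    proof cases
      case 1 then show ?thesis using d by (simp add: hh_def g_def power2_eq_square)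
    next
      case 2 then show ?thesis using d by (simp add: hh_def g_def power2_eq_square)
    next
      case 3
      then have "real_of_int j \<noteq> 0" "real_of_int (j - d) \<noteq> 0" "real_of_int d \<noteq> 0" "real_of_int (d - j) \<noteq> 0" using d by auto
      then show ?thesis using 3 by (simp add: hh_def g_def field_simps)
    qed
  qed
  ultimately have "((\<lambda>j. 1 / (real_of_int (d - j) * real_of_int j)) has_sum (- 2 / (real_of_int d)^2)) UNIV"
    by simp
  from shift_has_sum[OF this, of "- l"] show ?thesis by (simp add: d_def algebra_simps)
qed

lemma sq_sum_nat: "((\<lambda>n::nat. 1 / (real n + 1)^2) has_sum (pi^2 / 6)) UNIV"
proof -
  have s: "(\<lambda>n::nat. 1 / (real n + 1)^2) sums (pi^2 / 6)" using inverse_squares_sums by (simp add: add.commute)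
  then have "summable (\<lambda>n::nat. norm (1 / (real n + 1)^2))" by (simp add: sums_iff)
  from norm_summable_imp_has_sum[OF this s] show ?thesis .
qed

lemma sq_sum_int: "((\<lambda>k. 1 / (real_of_int (k - n))^2) has_sum (pi^2 / 3)) (UNIV - {n})"
proof -
  let ?F = "\<lambda>k. 1 / (real_of_int (k - n))^2"
  let ?f1 = "\<lambda>m::nat. n + int m + 1" and ?f2 = "\<lambda>m::nat. n - int m - 1"
  have h1: "(?F has_sum (pi^2/6)) (range ?f1)"
  proof (subst has_sum_reindex)
    have "(?F \<circ> ?f1) = (\<lambda>n::nat. 1 / (real n + 1)^2)"
      by (auto simp: o_def algebra_simps)
    then show "((?F \<circ> ?f1) has_sum (pi^2/6)) UNIV" using sq_sum_nat by simp
  qed (auto simp: inj_on_def)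
  have h2: "(?F has_sum (pi^2/6)) (range ?f2)"
  proof (subst has_sum_reindex)
    have "(?F \<circ> ?f2) = (\<lambda>n::nat. 1 / (real n + 1)^2)"
      by (auto simp: o_def power2_eq_square algebra_simps)
    then show "((?F \<circ> ?f2) has_sum (pi^2/6)) UNIV" using sq_sum_nat by simp
  qed (auto simp: inj_on_def)
  have "?f1 a \<noteq> ?f2 b" for a b by simp
  then have dj: "range ?f1 \<inter> range ?f2 = {}" by blast
  have un: "range ?f1 \<union> range ?f2 = UNIV - {n}"
  proof -
    have "j \<in> range ?f1 \<union> range ?f2" if "j \<noteq> n" for j :: int
    proof (cases "j > n")
      case True then have "j = ?f1 (nat (j - n - 1))" by simp
      then show ?thesis by blast
    next
      case False then have "j = ?f2 (nat (n - j - 1))" using that by simp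
      then show ?thesis by blast
    qed
    then show ?thesis by auto
  qed
  from has_sum_Un_disjoint[OF h1 h2 dj] show ?thesis unfolding un by simp
qed

lemma sum2: "k \<noteq> l \<Longrightarrow> (\<Sum>a\<in>{k,l}. \<Sum>b\<in>{k,l}. F a b) = F k k + F k l + F l k + (F l l :: complex)"
  by simp

lemma sum3: "k \<noteq> m \<Longrightarrow> k \<noteq> l \<Longrightarrow> m \<noteq> l \<Longrightarrow> (\<Sum>a\<in>{k,m,l}. \<Sum>b\<in>{k,m,l}. F a b) =
   F k k + F k m + F k l + F m k + F m m + F m l + F l k + F l m + (F l l :: complex)"
  by (simp add: algebra_simps)

lemma alg: "cnj a * 1 * a + cnj a * aa * (-1) + cnj a * b * t + (-1) * cnj aa * a + (-1) * 1 * (-1) + (-1) * cc * t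
   + cnj t * cnj b * a + cnj t * cnj cc * (-1) + cnj t * 1 * t
   = (1 - a * cnj a) + t * (cnj a * b - cc) + cnj t * (a * cnj b - cnj cc) + t * cnj (t::complex)" if "aa = a"
  using that by (simp add: algebra_simps)

lemma psdD:
  assumes "psd_kernel B" "finite F"
  shows "Im (\<Sum>k\<in>F. \<Sum>l\<in>F. cnj (c k) * B k l * c l) = 0"
    "Re (\<Sum>k\<in>F. \<Sum>l\<in>F. cnj (c k) * B k l * c l) \<ge> 0"
  using assms unfolding psd_kernel_def Let_def by auto

lemma psd_herm:
  assumes psd: "psd_kernel B" and diag: "\<forall>k. B k k = 1"
  shows "B l k = cnj (B k l)"
proof (cases "k = l")
  case True then show ?thesis using diag by simp
next
  case False
  define c1 where "c1 = (\<lambda>x::int. 1::complex)"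
  define c2 where "c2 = (\<lambda>x::int. if x = k then 1 else \<i>)"
  have s1: "Im (\<Sum>a\<in>{k,l}. \<Sum>b\<in>{k,l}. cnj (c1 a) * B a b * c1 b) = 0"
    by (rule psdD[OF psd]) simp
  have s2: "Im (\<Sum>a\<in>{k,l}. \<Sum>b\<in>{k,l}. cnj (c2 a) * B a b * c2 b) = 0"
    by (rule psdD[OF psd]) simp
  have "Im (B k l) + Im (B l k) = 0" using s1 diag unfolding sum2[OF False] by (simp add: c1_def)
  moreover have "Re (B k l) - Re (B l k) = 0" using s2 False diag unfolding sum2[OF False] by (simp add: c2_def)
  ultimately show ?thesis by (simp add: complex_eq_iff)
qed

lemma psd_trans:
  assumes psd: "psd_kernel B" and diag: "\<forall>k. B k k = 1" and unit: "\<forall>k l. cmod (B k l) = 1"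
  shows "B k m * B m l = B k l"
proof -
  have herm: "\<And>k l. B l k = cnj (B k l)" using psd_herm[OF psd diag] by blast
  have uu: "\<And>k l. B k l * cnj (B k l) = 1"
    using unit by (metis complex_norm_square of_real_1 power_one)
  consider "m = k" | "m = l" | "k = l" "m \<noteq> k" | "m \<noteq> k" "m \<noteq> l" "k \<noteq> l" by blast
  then show ?thesis
  proof cases
    case 1 then show ?thesis using diag by simp
  next
    case 2 then show ?thesis using diag by simp
  next
    case 3 then show ?thesis using diag herm[of k m] uu[of k m] by simp
  next
    case 4
    define a where "a = B k m"
    define b where "b = B k l"
    define cc where "cc = B m l"
    define z where "z = cnj a * b - cc"
    define t where "t = - cnj z"
    define c where "c = (\<lambda>x. if x = k then a else if x = m then -1 else t)"
    have ge: "Re (\<Sum>x\<in>{k,m,l}. \<Sum>y\<in>{k,m,l}. cnj (c x) * B x y * c y) \<ge> 0"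
      by (rule psdD[OF psd]) simp
    have eq1: "(\<Sum>x\<in>{k,m,l}. \<Sum>y\<in>{k,m,l}. cnj (c x) * B x y * c y)
       = (1 - a * cnj a) + t * (cnj a * b - cc) + cnj t * (a * cnj b - cnj cc) + t * cnj t"
    proof -
      have "B m k = cnj a" "B l k = cnj b" "B l m = cnj cc" "B k m = a" "B k l = b" "B m l = cc"
        using herm[of k m] herm[of k l] herm[of m l] by (simp_all add: a_def b_def cc_def)
      then have e: "(\<Sum>x\<in>{k,m,l}. \<Sum>y\<in>{k,m,l}. cnj (c x) * B x y * c y) =
        cnj a * 1 * a + cnj a * a * (-1) + cnj a * b * t + (-1) * cnj a * a + (-1) * 1 * (-1) + (-1) * cc * t
   + cnj t * cnj b * a + cnj t * cnj cc * (-1) + cnj t * 1 * t"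
      proof -
        have cv: "c k = a" "c m = -1" "c l = t" using 4 by (auto simp: c_def)
        show ?thesis using 4 diag by (subst sum3) (simp_all only: cv \<open>B m k = cnj a\<close> \<open>B l k = cnj b\<close> \<open>B l m = cnj cc\<close> \<open>B k m = a\<close> \<open>B k l = b\<close> \<open>B m l = cc\<close> complex_cnj_minus complex_cnj_one not_False_eq_True)
      qed
      show ?thesis unfolding e by (rule alg) simp
    qed
    have aa: "a * cnj a = 1" using uu a_def by simp
    have eq2: "(1 - a * cnj a) + t * (cnj a * b - cc) + cnj t * (a * cnj b - cnj cc) + t * cnj t
       = - (z * cnj z)" using aa by (simp add: t_def z_def algebra_simps)
    have "Re (- (z * cnj z)) \<ge> 0" using ge unfolding eq1 eq2 .
    moreover have "z * cnj z = of_real ((cmod z)^2)" by (metis complex_norm_square)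
    ultimately have "(cmod z)^2 \<le> 0" by simp
    then have "z = 0" by simp
    then have "cc = cnj a * b" by (simp add: z_def)
    then have "a * cc = b" using \<open>a * cnj a = 1\<close> by (metis mult.assoc mult_1)
    then show ?thesis by (simp add: a_def b_def cc_def)
  qed
qed

definition dg :: "(int \<Rightarrow> complex) \<Rightarrow> cmatrix" where
  "dg a k l = (if k = l then a k else 0)"

lemma mmult_dg_left: "mmult (dg a) M k l = a k * M k l"
  unfolding mmult_def
  by (rule infsumI, rule has_sum_finite_neutralI[of "{k}"]) (auto simp: dg_def)

lemma mmult_dg_right: "mmult M (dg a) k l = M k l * a l"
  unfolding mmult_def
  by (rule infsumI, rule has_sum_finite_neutralI[of "{l}"]) (auto simp: dg_def)

lemma adjm_dg: "adjm (dg a) = dg (\<lambda>k. cnj (a k))"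
  by (auto simp: adjm_def dg_def fun_eq_iff)

lemma Vop_dg: "Vop x = dg (\<lambda>k. cis (x * of_int k))"
  by (auto simp: Vop_def dg_def fun_eq_iff cis_conv_exp mult.assoc)

lemma bounded_dg:
  assumes "\<And>k. cmod (a k) \<le> 1"
  shows "bounded_matrix (dg a)"
  unfolding bounded_matrix_def
proof (intro exI[of _ 1] allI impI)
  fix F :: "int set" and f g :: "int \<Rightarrow> complex"
  assume F: "finite F"
  have inner: "(\<Sum>l\<in>F. cnj (f k) * dg a k l * g l) = cnj (f k) * a k * g k" if "k \<in> F" for k
  proof -
    have "(\<Sum>l\<in>F. cnj (f k) * dg a k l * g l) = (\<Sum>l\<in>F. if l = k then cnj (f k) * a k * g k else 0)"
      by (rule sum.cong) (auto simp: dg_def)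
    also have "\<dots> = cnj (f k) * a k * g k" using F that by simp
    finally show ?thesis .
  qed
  have "cmod (\<Sum>k\<in>F. \<Sum>l\<in>F. cnj (f k) * dg a k l * g l) = cmod (\<Sum>k\<in>F. cnj (f k) * a k * g k)"
    using inner by (metis (no_types, lifting) sum.cong)
  also have "\<dots> \<le> (\<Sum>k\<in>F. cmod (cnj (f k) * a k * g k))" by (rule norm_sum)
  also have "\<dots> \<le> (\<Sum>k\<in>F. \<bar>cmod (f k)\<bar> * \<bar>cmod (g k)\<bar>)"
  proof (rule sum_mono)
    fix k
    have "cmod (cnj (f k) * a k * g k) = cmod (f k) * cmod (a k) * cmod (g k)" by (simp add: norm_mult)
    also have "\<dots> \<le> cmod (f k) * 1 * cmod (g k)"
      by (intro mult_right_mono mult_left_mono assms) auto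
    finally show "cmod (cnj (f k) * a k * g k) \<le> \<bar>cmod (f k)\<bar> * \<bar>cmod (g k)\<bar>" by simp
  qed
  also have "\<dots> \<le> L2_set (\<lambda>k. cmod (f k)) F * L2_set (\<lambda>k. cmod (g k)) F"
    by (rule L2_set_mult_ineq)
  also have "\<dots> = 1 * sqrt (\<Sum>k\<in>F. (cmod (f k))\<^sup>2) * sqrt (\<Sum>l\<in>F. (cmod (g l))\<^sup>2)"
    by (simp add: L2_set_def)
  finally show "cmod (\<Sum>k\<in>F. \<Sum>l\<in>F. cnj (f k) * dg a k l * g l)
     \<le> 1 * sqrt (\<Sum>k\<in>F. (cmod (f k))\<^sup>2) * sqrt (\<Sum>l\<in>F. (cmod (g l))\<^sup>2)" .
qed

lemma unitary_dg:
  assumes u: "\<And>k. cmod (a k) = 1"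
  shows "unitary_matrix (dg a)"
proof -
  have uu: "a k * cnj (a k) = 1" "cnj (a k) * a k = 1" for k
    using u by (metis complex_norm_square mult.commute of_real_1 power_one)+
  show ?thesis
    unfolding unitary_matrix_def
    using uu by (auto intro!: bounded_dg simp: u fun_eq_iff mmult_dg_left adjm_dg dg_def idm_def)
qed

lemma iX_nonzero:
  fixes k l :: int assumes kl: "k \<noteq> l"
  defines "X \<equiv> {0..<pi / \<bar>real_of_int (k - l)\<bar>}"
  shows "iX X k l \<noteq> 0" and "X \<in> sets borel" and "X \<subseteq> {0..<2*pi}"
proof -
  define d where "d = real_of_int (k - l)"
  have d: "d \<noteq> 0" using kl by (simp add: d_def)
  have c: "complex_of_int (k - l) \<noteq> 0" using kl by simp
  have a: "0 \<le> pi / \<bar>d\<bar>" by simp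
  have "\<i> * complex_of_int (k - l) * complex_of_real (pi / \<bar>d\<bar>) = \<i> * of_real (d * (pi / \<bar>d\<bar>))"
    by (simp add: d_def)
  also have "d * (pi / \<bar>d\<bar>) = (if d > 0 then pi else - pi)" using d by (auto simp: abs_if)
  finally have "exp (\<i> * complex_of_int (k - l) * complex_of_real (pi / \<bar>d\<bar>)) = cis (if d > 0 then pi else - pi)"
    by (simp add: cis_conv_exp)
  also have "\<dots> = -1" by (auto simp: complex_eq_iff)
  finally have e: "exp (\<i> * complex_of_int (k - l) * complex_of_real (pi / \<bar>d\<bar>)) = -1" .
  have "iX X k l = complex_of_real (1 / (2 * pi)) * ((-1 - 1) / (\<i> * complex_of_int (k - l)))"
    unfolding iX_def X_def using int0[OF c a] e by (simp add: d_def)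
  then show "iX X k l \<noteq> 0" using c by simp
  show "X \<in> sets borel" unfolding X_def by simp
  have "pi / \<bar>d\<bar> \<le> pi / 1"
    using d by (intro divide_left_mono) (auto simp: d_def)
  then show "X \<subseteq> {0..<2*pi}" unfolding X_def d_def using pi_gt_zero by auto
qed

lemma summ_w:
  fixes w :: "int \<Rightarrow> real"
  assumes w: "\<And>m. 0 \<le> w m \<and> w m \<le> 1"
  shows "(\<lambda>m. w m / (real_of_int (m - k))^2) summable_on (UNIV - {k})"
proof (rule summable_on_comparison_test)
  show "(\<lambda>m. 1 / (real_of_int (m - k))^2) summable_on (UNIV - {k})"
    using sq_sum_int[of k] by (rule has_sum_imp_summable)
  fix m
  show "w m / (real_of_int (m - k))^2 \<le> 1 / (real_of_int (m - k))^2"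
    using w[of m] by (intro divide_right_mono) auto
  show "0 \<le> w m / (real_of_int (m - k))^2" using w[of m] by simp
qed

lemma unit_from_sum:
  fixes w :: "int \<Rightarrow> real"
  assumes w: "\<And>m. 0 \<le> w m \<and> w m \<le> 1"
    and s: "infsum (\<lambda>m. w m / (real_of_int (m - k))^2) (UNIV - {k}) = pi^2/3"
    and m: "m \<noteq> k"
  shows "w m = 1"
proof -
  have sm: "(\<lambda>m. w m / (real_of_int (m - k))^2) summable_on (UNIV - {k})"
    by (rule summ_w) (rule w)
  have hs: "((\<lambda>m. w m / (real_of_int (m - k))^2) has_sum (pi^2/3)) (UNIV - {k})"
    using has_sum_infsum[OF sm] unfolding s .
  have "((\<lambda>m. 1 / (real_of_int (m - k))^2 - w m / (real_of_int (m - k))^2) has_sum (pi^2/3 - pi^2/3)) (UNIV - {k})"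
    by (rule has_sum_diff'[OF sq_sum_int hs])
  then have "((\<lambda>m. 1 / (real_of_int (m - k))^2 - w m / (real_of_int (m - k))^2) has_sum 0) (UNIV - {k})"
    by simp
  from nonneg_has_sum_le_0D[OF this order_refl _, of m]
  have "1 / (real_of_int (m - k))^2 - w m / (real_of_int (m - k))^2 = 0"
    using m w by (auto intro: divide_right_mono simp: diff_divide_distrib[symmetric])
  moreover have "real_of_int (m - k) \<noteq> 0" using m by simp
  ultimately show ?thesis by (simp add: diff_divide_distrib[symmetric])
qed

lemma sB_iff:
  assumes disc: "\<forall>k l. cmod (B k l) \<le> 1" and diag: "\<forall>k. B k k = 1"
  shows "(\<forall>n l. sB B n l = 0) \<longleftrightarrow> (\<forall>k l. cmod (B k l) = 1)"
proof
  assume u: "\<forall>k l. cmod (B k l) = 1"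
  show "\<forall>n l. sB B n l = 0"
  proof (intro allI)
    fix n l
    have "(\<lambda>k. (cmod (B n k)) ^ l / (real_of_int (k - n))\<^sup>2) = (\<lambda>k. 1 / (real_of_int (k - n))\<^sup>2)"
      using u by simp
    then have "infsum (\<lambda>k. (cmod (B n k)) ^ l / (real_of_int (k - n))\<^sup>2) (UNIV - {n}) = pi^2/3"
      using infsumI[OF sq_sum_int[of n]] by simp
    then show "sB B n l = 0" by (simp add: sB_def)
  qed
next
  assume z: "\<forall>n l. sB B n l = 0"
  show "\<forall>k l. cmod (B k l) = 1"
  proof (intro allI)
    fix n m
    show "cmod (B n m) = 1"
    proof (cases "m = n")
      case True then show ?thesis using diag by simp
    next
      case False
      define S where "S = infsum (\<lambda>k. cmod (B n k) / (real_of_int (k - n))\<^sup>2) (UNIV - {n})"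
      have "sB B n 1 = (pi / sqrt 3) * (1 - 3 / pi\<^sup>2 * S)" by (simp add: sB_def S_def)
      moreover have "sB B n 1 = 0" using z by blast
      moreover have "pi / sqrt 3 \<noteq> 0" by simp
      ultimately have "1 - 3 / pi\<^sup>2 * S = 0" by (metis mult_eq_0_iff)
      then have h: "3 / pi\<^sup>2 * S = 1" by linarith
      have "S = pi^2/3 * (3 / pi\<^sup>2 * S)" by (simp add: field_simps)
      then have "S = pi^2/3" unfolding h by simp
      then have "infsum (\<lambda>k. cmod (B n k) / (real_of_int (k - n))\<^sup>2) (UNIV - {n}) = pi^2/3"
        unfolding S_def .
      from unit_from_sum[of "\<lambda>k. cmod (B n k)", OF _ this False] disc show ?thesis by simp
    qed
  qed
qed

lemma aux_ii: "(x::complex) \<noteq> 0 \<Longrightarrow> (- \<i> / (- x)) * (- \<i> / x) = 1 / x^2"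
  by (simp add: field_simps power2_eq_square)

lemma noise_diag:
  assumes disc: "\<forall>k l. cmod (B k l) \<le> 1" and psd: "psd_kernel B" and diag: "\<forall>k. B k k = 1"
  shows "noise_op B k k = of_real (pi^2/3 - infsum (\<lambda>m. (cmod (B k m))^2 / (real_of_int (m - k))^2) (UNIV - {k}))"
proof -
  define q where "q m = (cmod (B k m))^2 / (real_of_int (m - k))^2" for m
  define Q where "Q = infsum q (UNIV - {k})"
  have sm: "q summable_on (UNIV - {k})" unfolding q_def
    by (rule summ_w) (use disc in \<open>auto intro: power_le_one\<close>)
  have h1: "(q has_sum Q) (UNIV - {k})" using has_sum_infsum[OF sm] unfolding Q_def .
  have h2: "(q has_sum 0) {k}" by (rule has_sum_finite_neutralI[of "{k}"]) (auto simp: q_def)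
  have "(q has_sum (Q + 0)) ((UNIV - {k}) \<union> {k})" by (rule has_sum_Un_disjoint[OF h1 h2]) auto
  then have h3: "(q has_sum Q) UNIV" by (simp add: insert_absorb)
  have h4: "((\<lambda>m. complex_of_real (q m)) has_sum of_real Q) UNIV" by (rule has_sum_of_real[OF h3])
  have h5: "((\<lambda>m. if m = k then complex_of_real (pi^2) else 0) has_sum of_real (pi^2)) UNIV"
    by (rule has_sum_finite_neutralI[of "{k}"]) auto
  have h6: "((\<lambda>m. complex_of_real (q m) + (if m = k then complex_of_real (pi^2) else 0)) has_sum
     (of_real Q + of_real (pi^2))) UNIV"
    by (rule has_sum_add[OF h4 h5])
  have pw: "EBmoment B 1 k m * EBmoment B 1 m k = complex_of_real (q m) + (if m = k then complex_of_real (pi^2) else 0)" for m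
  proof (cases "m = k")
    case True then show ?thesis using diag unfolding EBm1 by (simp add: q_def power2_eq_square)
  next
    case False
    have herm: "B m k = cnj (B k m)" by (rule psd_herm[OF psd diag])
    have nsq: "B k m * cnj (B k m) = of_real ((cmod (B k m))^2)" by (metis complex_norm_square)
    have d: "complex_of_int (m - k) \<noteq> 0" using False by simp
    have "EBmoment B 1 k m * EBmoment B 1 m k =
       (B k m * cnj (B k m)) * ((- \<i> / complex_of_int (k - m)) * (- \<i> / complex_of_int (m - k)))"
      using False unfolding EBm1 by (simp add: herm algebra_simps)
    also have "(- \<i> / complex_of_int (k - m)) * (- \<i> / complex_of_int (m - k)) = 1 / (complex_of_int (m - k))^2"
    proof -
      have "complex_of_int (k - m) = - complex_of_int (m - k)" by simp
      then show ?thesis using aux_ii[OF d] by simp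
    qed
    finally show ?thesis using False unfolding nsq q_def by simp
  qed
  have "mmult (EBmoment B 1) (EBmoment B 1) k k = of_real Q + of_real (pi^2)"
    unfolding mmult_def pw by (rule infsumI[OF h6])
  moreover have "EBmoment B 2 k k = of_real (4 * pi^2 / 3)" using diag unfolding EBm2 by simp
  ultimately have "noise_op B k k = of_real (4 * pi^2 / 3) - (of_real Q + of_real (pi^2))"
    by (simp add: noise_op_def)
  also have "\<dots> = of_real (pi^2/3 - Q)" by simp
  finally show ?thesis unfolding Q_def q_def .
qed

lemma noise_offdiag:
  assumes psd: "psd_kernel B" and diag: "\<forall>k. B k k = 1" and unit: "\<forall>k l. cmod (B k l) = 1"
    and kl: "k \<noteq> l"
  shows "noise_op B k l = 0"
proof -
  define c where "c = complex_of_int (k - l)"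
  have c: "c \<noteq> 0" using kl by (simp add: c_def)
  define r where "r m = 1 / (real_of_int (k - m) * real_of_int (m - l))" for m
  define g where "g m = ((if m = k then - \<i> * of_real pi / c else 0)
       + (if m = l then - \<i> * of_real pi / c else 0)) + - complex_of_real (r m)" for m
  have hr: "(r has_sum (- 2 / (real_of_int (k - l))^2)) UNIV" unfolding r_def by (rule offdiag_sum[OF kl])
  have "((\<lambda>m. - complex_of_real (r m)) has_sum - of_real (- 2 / (real_of_int (k - l))^2)) UNIV"
    using has_sum_of_real[OF hr] has_sum_uminus by (metis minus_minus)
  then have hr2: "((\<lambda>m. - complex_of_real (r m)) has_sum 2 / c^2) UNIV" by (simp add: c_def)
  have hf: "((\<lambda>m. (if m = k then - \<i> * of_real pi / c else 0) + (if m = l then - \<i> * of_real pi / c else 0))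
      has_sum (- 2 * of_real pi * \<i> / c)) UNIV"
    by (rule has_sum_finite_neutralI[of "{k, l}"]) (use kl in auto)
  have hg: "(g has_sum (- 2 * of_real pi * \<i> / c + 2 / c^2)) UNIV"
    unfolding g_def by (rule has_sum_add[OF hf hr2])
  have hg2: "((\<lambda>m. B k l * g m) has_sum (B k l * (- 2 * of_real pi * \<i> / c + 2 / c^2))) UNIV"
    by (rule has_sum_cmult_right[OF hg])
  have pw: "EBmoment B 1 k m * EBmoment B 1 m l = B k l * g m" for m
  proof -
    consider "m = k" | "m = l" | "m \<noteq> k" "m \<noteq> l" by blast
    then show ?thesis
    proof cases
      case 1 then show ?thesis using kl diag unfolding EBm1 by (simp add: g_def r_def c_def)
    next
      case 2 then show ?thesis using kl diag unfolding EBm1 by (simp add: g_def r_def c_def)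
    next
      case 3
      have tr: "B k m * B m l = B k l" by (rule psd_trans[OF psd diag unit])
      have d1: "complex_of_int (k - m) \<noteq> 0" "complex_of_int (m - l) \<noteq> 0" using 3 by auto
      have "EBmoment B 1 k m * EBmoment B 1 m l = (B k m * B m l) * ((- \<i> / complex_of_int (k - m)) * (- \<i> / complex_of_int (m - l)))"
        using 3 unfolding EBm1 by (simp add: algebra_simps)
      also have "\<dots> = B k l * (- complex_of_real (r m))"
        unfolding tr r_def using d1 by (simp add: field_simps)
      finally show ?thesis using 3 by (simp add: g_def)
    qed
  qed
  have "mmult (EBmoment B 1) (EBmoment B 1) k l = B k l * (- 2 * of_real pi * \<i> / c + 2 / c^2)"
    unfolding mmult_def pw by (rule infsumI[OF hg2])
  moreover have "EBmoment B 2 k l = B k l * (- 2 * of_real pi * \<i> / c + 2 / c^2)"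
    using kl unfolding EBm2 c_def by simp
  ultimately show ?thesis by (simp add: noise_op_def)
qed

lemma W_diag:
  assumes V: "\<forall>x. mmult (mmult W (Vop x)) (adjm W) = Vop x"
  shows "\<And>m. m \<noteq> k \<Longrightarrow> W k m = 0" and "cmod (W k k) = 1"
proof -
  define a where "a m = (cmod (W k m))^2" for m
  have H: "((\<lambda>m. a m * cos (x * of_int m - x * of_int k)) has_sum 1) UNIV" for x
  proof -
    have pw: "(W k m * cis (x * of_int m)) * cnj (W k m) = of_real (a m) * cis (x * of_int m)" for m
    proof -
      have "W k m * cnj (W k m) = of_real (a m)" unfolding a_def by (metis complex_norm_square)
      then show ?thesis by (metis mult.assoc mult.commute)
    qed
    have h: "mmult (mmult W (Vop x)) (adjm W) k k = Vop x k k" using V by simp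
    have inner: "mmult W (Vop x) = (\<lambda>k l. W k l * cis (x * of_int l))"
      by (auto simp: fun_eq_iff Vop_dg mmult_dg_right)
    have vk: "Vop x k k = cis (x * of_int k)" by (simp add: Vop_dg dg_def)
    have "infsum (\<lambda>m. (W k m * cis (x * of_int m)) * cnj (W k m)) UNIV = cis (x * of_int k)"
      using h[unfolded inner, unfolded mmult_def adjm_def] unfolding vk .
    then have e: "infsum (\<lambda>m. of_real (a m) * cis (x * of_int m)) UNIV = cis (x * of_int k)"
      unfolding pw .
    then have "(\<lambda>m. of_real (a m) * cis (x * of_int m)) summable_on UNIV"
      using infsum_not_exists by fastforce
    from has_sum_infsum[OF this] e
    have "((\<lambda>m. of_real (a m) * cis (x * of_int m)) has_sum cis (x * of_int k)) UNIV" by simp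
    from has_sum_cmult_right[OF this, of "cis (- (x * of_int k))"]
    have "((\<lambda>m. cis (- (x * of_int k)) * (of_real (a m) * cis (x * of_int m))) has_sum 1) UNIV"
      by (simp add: cis_mult)
    from has_sum_Re[OF this]
    show ?thesis by (simp add: cis_mult algebra_simps)
  qed
  have H0: "(a has_sum 1) UNIV" using H[of 0] by simp
  have Z: "a m = 0" if "m \<noteq> k" for m
  proof -
    define x where "x = pi / real_of_int (m - k)"
    have nz: "real_of_int (m - k) \<noteq> 0" using that by simp
    have "x * of_int m - x * of_int k = x * real_of_int (m - k)" by (simp add: algebra_simps)
    also have "\<dots> = pi" using nz by (simp add: x_def)
    finally have "x * of_int m - x * of_int k = pi" .
    then have c: "cos (x * of_int m - x * of_int k) = -1" by simp
    have "((\<lambda>m. a m - a m * cos (x * of_int m - x * of_int k)) has_sum (1 - 1)) UNIV"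
      by (rule has_sum_diff'[OF H0 H])
    then have "((\<lambda>m. a m - a m * cos (x * of_int m - x * of_int k)) has_sum 0) UNIV" by simp
    from nonneg_has_sum_le_0D[OF this order_refl _, of m]
    have "a m - a m * cos (x * of_int m - x * of_int k) = 0"
    proof -
      have "0 \<le> a j - a j * cos (x * of_int j - x * of_int k)" for j
      proof -
        have "a j * cos (x * of_int j - x * of_int k) \<le> a j * 1"
          by (rule mult_left_mono) (auto simp: a_def)
        then show ?thesis by simp
      qed
      then show ?thesis using nonneg_has_sum_le_0D[OF \<open>(_ has_sum 0) UNIV\<close> order_refl] by blast
    qed
    then show ?thesis using c by simp
  qed
  show "W k m = 0" if "m \<noteq> k" for m using Z[OF that] by (simp add: a_def)
  have "(a has_sum a k) UNIV"
    by (rule has_sum_finite_neutralI[of "{k}"]) (use Z in auto)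
  then have "a k = 1" using H0 has_sum_unique by blast
  then have "(cmod (W k k))^2 = 1" by (simp add: a_def)
  then have "cmod (W k k) = 1 \<or> cmod (W k k) = -1" by (simp add: power2_eq_1_iff)
  moreover have "cmod (W k k) \<ge> 0" by simp
  ultimately show "cmod (W k k) = 1" by linarith
qed

theorem corollary5p1:
  fixes B :: "int \<Rightarrow> int \<Rightarrow> complex"
  assumes disc: "\<forall>k l. cmod (B k l) \<le> 1"
    and psd: "psd_kernel B"
    and diag: "\<forall>k. B k k = 1"
  shows "((noise_op B = (\<lambda>k l. 0)) \<longleftrightarrow> (\<forall>n l. sB B n l = 0))
       \<and> ((\<forall>n l. sB B n l = 0) \<longleftrightarrow> (\<forall>k l. cmod (B k l) = 1))
       \<and> ((\<forall>k l. cmod (B k l) = 1) \<longleftrightarrow>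
          (\<exists>W. unitary_matrix W
             \<and> (\<forall>x. mmult (mmult W (Vop x)) (adjm W) = Vop x)
             \<and> (\<forall>X. X \<in> sets borel \<and> X \<subseteq> {0..<2*pi} \<longrightarrow>
                  mmult (mmult W (EB (\<lambda>k l. 1) X)) (adjm W) = EB B X)))"
proof -
  have BC: "(\<forall>n l. sB B n l = 0) \<longleftrightarrow> (\<forall>k l. cmod (B k l) = 1)" by (rule sB_iff[OF disc diag])
  have AC: "(noise_op B = (\<lambda>k l. 0)) \<longleftrightarrow> (\<forall>k l. cmod (B k l) = 1)"
  proof
    assume n0: "noise_op B = (\<lambda>k l. 0)"
    show "\<forall>k l. cmod (B k l) = 1"
    proof (intro allI)
      fix k m
      show "cmod (B k m) = 1"
      proof (cases "m = k")
        case True then show ?thesis using diag by simp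
      next
        case False
        have "noise_op B k k = 0" using n0 by simp
        then have "pi^2/3 - infsum (\<lambda>m. (cmod (B k m))^2 / (real_of_int (m - k))^2) (UNIV - {k}) = 0"
          unfolding noise_diag[OF disc psd diag] by (simp only: of_real_eq_0_iff)
        then have "infsum (\<lambda>m. (cmod (B k m))^2 / (real_of_int (m - k))^2) (UNIV - {k}) = pi^2/3" by simp
        from unit_from_sum[of "\<lambda>m. (cmod (B k m))^2", OF _ this False]
        have "(cmod (B k m))^2 = 1" using disc by (simp add: power_le_one)
        then have "cmod (B k m) = 1 \<or> cmod (B k m) = -1" by (simp add: power2_eq_1_iff)
        moreover have "cmod (B k m) \<ge> 0" by simp
        ultimately show ?thesis by linarith
      qed
    qed
  next
    assume u: "\<forall>k l. cmod (B k l) = 1"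
    show "noise_op B = (\<lambda>k l. 0)"
    proof (intro ext)
      fix k l
      show "noise_op B k l = 0"
      proof (cases "k = l")
        case True
        have "(\<lambda>m. (cmod (B k m))^2 / (real_of_int (m - k))^2) = (\<lambda>m. 1 / (real_of_int (m - k))^2)"
          using u by simp
        then have S3: "infsum (\<lambda>m. (cmod (B k m))^2 / (real_of_int (m - k))^2) (UNIV - {k}) = pi^2/3"
          using infsumI[OF sq_sum_int[of k]] by simp
        have "noise_op B k k = 0" unfolding noise_diag[OF disc psd diag] S3 by simp
        then show ?thesis using True by simp
      next
        case False then show ?thesis by (rule noise_offdiag[OF psd diag u])
      qed
    qed
  qed
  have CD: "(\<forall>k l. cmod (B k l) = 1) \<longleftrightarrow>
          (\<exists>W. unitary_matrix W
             \<and> (\<forall>x. mmult (mmult W (Vop x)) (adjm W) = Vop x)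
             \<and> (\<forall>X. X \<in> sets borel \<and> X \<subseteq> {0..<2*pi} \<longrightarrow>
                  mmult (mmult W (EB (\<lambda>k l. 1) X)) (adjm W) = EB B X))"
  proof
    assume u: "\<forall>k l. cmod (B k l) = 1"
    define w where "w k = B k 0" for k
    have wu: "cmod (w k) = 1" for k using u by (simp add: w_def)
    have ww: "w k * cnj (w k) = 1" for k using wu by (metis complex_norm_square of_real_1 power_one)
    have wB: "w k * cnj (w l) = B k l" for k l
    proof -
      have "cnj (w l) = B 0 l" unfolding w_def using psd_herm[OF psd diag, of l 0] by simp
      then show ?thesis unfolding w_def using psd_trans[OF psd diag u, of k 0 l] by simp
    qed
    show "\<exists>W. unitary_matrix W
             \<and> (\<forall>x. mmult (mmult W (Vop x)) (adjm W) = Vop x)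
             \<and> (\<forall>X. X \<in> sets borel \<and> X \<subseteq> {0..<2*pi} \<longrightarrow>
                  mmult (mmult W (EB (\<lambda>k l. 1) X)) (adjm W) = EB B X)"
    proof (intro exI[of _ "dg w"] conjI allI impI)
      show "unitary_matrix (dg w)" by (rule unitary_dg[OF wu])
    next
      fix x
      show "mmult (mmult (dg w) (Vop x)) (adjm (dg w)) = Vop x"
        unfolding adjm_dg by (auto simp: fun_eq_iff mmult_dg_left mmult_dg_right Vop_dg dg_def ww)
    next
      fix X :: "real set"
      show "mmult (mmult (dg w) (EB (\<lambda>k l. 1) X)) (adjm (dg w)) = EB B X"
        unfolding adjm_dg
      proof (intro ext)
        fix k l
        show "mmult (mmult (dg w) (EB (\<lambda>k l. 1) X)) (dg (\<lambda>k. cnj (w k))) k l = EB B X k l"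
          unfolding mmult_dg_left mmult_dg_right EB_def using wB[of k l]
          by (simp add: algebra_simps)
      qed
    qed
  next
    assume "\<exists>W. unitary_matrix W
             \<and> (\<forall>x. mmult (mmult W (Vop x)) (adjm W) = Vop x)
             \<and> (\<forall>X. X \<in> sets borel \<and> X \<subseteq> {0..<2*pi} \<longrightarrow>
                  mmult (mmult W (EB (\<lambda>k l. 1) X)) (adjm W) = EB B X)"
    then obtain W where V: "\<forall>x. mmult (mmult W (Vop x)) (adjm W) = Vop x"
      and E: "\<forall>X. X \<in> sets borel \<and> X \<subseteq> {0..<2*pi} \<longrightarrow>
                  mmult (mmult W (EB (\<lambda>k l. 1) X)) (adjm W) = EB B X" by blast
    define w where "w k = W k k" for k
    have Wd: "W = dg w"
      using W_diag(1)[OF V] by (auto simp: fun_eq_iff dg_def w_def)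
    have wu: "cmod (w k) = 1" for k using W_diag(2)[OF V] by (simp add: w_def)
    show "\<forall>k l. cmod (B k l) = 1"
    proof (intro allI)
      fix k l
      show "cmod (B k l) = 1"
      proof (cases "k = l")
        case True then show ?thesis using diag by simp
      next
        case False
        define X where "X = {0..<pi / \<bar>real_of_int (k - l)\<bar>}"
        have X: "iX X k l \<noteq> 0" "X \<in> sets borel" "X \<subseteq> {0..<2*pi}"
          using iX_nonzero[OF False] unfolding X_def by auto
        have "mmult (mmult W (EB (\<lambda>k l. 1) X)) (adjm W) k l = EB B X k l" using E X by simp
        then have "w k * iX X k l * cnj (w l) = B k l * iX X k l"
          unfolding Wd adjm_dg mmult_dg_left mmult_dg_right EB_def by simp
        then have "B k l = w k * cnj (w l)" using X(1) by (simp add: algebra_simps)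
        then show ?thesis using wu by (simp add: norm_mult)
      qed
    qed
  qed
  show ?thesis using AC BC CD by blast
qed

end
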